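(* Let $(X,d,\kappa)$ be a digital metric space where $X$ is finite or $d$ is an $\ell_p$ metric for some $1\le p\le\infty$. Let $T:X\to X$ and $\alpha:X\times X\to[0,\infty)$. Suppose (1) $T$ is $\alpha$-admissible; (2) there exists $x_0\in X$ with $\alpha(x_0,T(x_0))\ge1$; and (3) there exist $\psi,\phi\in\Phi$ such that for all $x,y\in X$, \[\alpha(x,y)\,\psi(d(T(x),T(y)))\le\psi(M(x,y))-\phi(M(x,y)),\] where $M(x,y)=\max\{d(x,y),\ d(x,T(x)),\ d(y,T(y)),\ [d(x,T(y))+d(y,T(x))]/2\}$. Then $T$ has a fixed point. Further, if $u$ and $v$ are fixed points of $T$ with $\alpha(u,v)\ge1$, then $u=v$.
   Context: A digital metric space is a triple $(X,d,\kappa)$ where $X\subset\mathbb{Z}^n$ for some positive integer $n$, $\kappa$ is an adjacency relation on $X$, and $d$ is a metric on $X$. The $\ell_p$ metric on $\mathbb{Z}^n$ is $d(x,y)=(\sum_i|x_i-y_i|^p)^{1/p}$ for $1\le p<\infty$ and $\max_i|x_i-y_i|$ for $p=\infty$. $\Phi$ is the set of functions $\phi:[0,\infty)\to[0,\infty)$ that are increasing, satisfy $\phi(t)=0$ iff $t=0$, and $\phi(t)<t$ for $t>0$. $T$ is $\alpha$-admissible if $\alpha(x,y)\ge1$ implies $\alpha(T(x),T(y))\ge1$. *)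

theory Defs
  imports "HOL-Analysis.Analysis"
begin

definition metric_on :: "('a set) \<Rightarrow> ('a \<Rightarrow> 'a \<Rightarrow> real) \<Rightarrow> bool" where
  "metric_on X d \<longleftrightarrow>
     (\<forall>x\<in>X. \<forall>y\<in>X. d x y \<ge> 0 \<and> (d x y = 0 \<longleftrightarrow> x = y) \<and> d x y = d y x) \<and>
     (\<forall>x\<in>X. \<forall>y\<in>X. \<forall>z\<in>X. d x z \<le> d x y + d y z)"

definition adjacency_on :: "('a set) \<Rightarrow> ('a \<Rightarrow> 'a \<Rightarrow> bool) \<Rightarrow> bool" where
  "adjacency_on X \<kappa> \<longleftrightarrow> (\<forall>x y. \<kappa> x y \<longrightarrow> x \<in> X \<and> y \<in> X \<and> x \<noteq> y \<and> \<kappa> y x)"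

definition digital_metric_space ::
  "(int ^ 'n) set \<Rightarrow> (int ^ 'n \<Rightarrow> int ^ 'n \<Rightarrow> real) \<Rightarrow> (int ^ 'n \<Rightarrow> int ^ 'n \<Rightarrow> bool) \<Rightarrow> bool" where
  "digital_metric_space X d \<kappa> \<longleftrightarrow> metric_on X d \<and> adjacency_on X \<kappa>"

definition lp_dist :: "real \<Rightarrow> int ^ 'n \<Rightarrow> int ^ 'n \<Rightarrow> real" where
  "lp_dist p x y = (\<Sum>i\<in>UNIV. \<bar>real_of_int (x $ i - y $ i)\<bar> powr p) powr (1 / p)"

definition linf_dist :: "int ^ 'n \<Rightarrow> int ^ 'n \<Rightarrow> real" where
  "linf_dist x y = Max (range (\<lambda>i. \<bar>real_of_int (x $ i - y $ i)\<bar>))"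

definition is_lp_metric_on :: "(int ^ 'n) set \<Rightarrow> (int ^ 'n \<Rightarrow> int ^ 'n \<Rightarrow> real) \<Rightarrow> bool" where
  "is_lp_metric_on X d \<longleftrightarrow>
     (\<exists>p::real. 1 \<le> p \<and> (\<forall>x\<in>X. \<forall>y\<in>X. d x y = lp_dist p x y)) \<or>
     (\<forall>x\<in>X. \<forall>y\<in>X. d x y = linf_dist x y)"

text \<open>The class Phi, on [0,infinity); "increasing" read as nondecreasing.\<close>
definition Phi_class :: "(real \<Rightarrow> real) \<Rightarrow> bool" where
  "Phi_class \<phi> \<longleftrightarrow> mono_on {0..} \<phi> \<and> (\<forall>t\<ge>0. \<phi> t \<ge> 0) \<and>
     (\<forall>t\<ge>0. \<phi> t = 0 \<longleftrightarrow> t = 0) \<and> (\<forall>t>0. \<phi> t < t)"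

definition alpha_admissible :: "'a set \<Rightarrow> ('a \<Rightarrow> 'a) \<Rightarrow> ('a \<Rightarrow> 'a \<Rightarrow> real) \<Rightarrow> bool" where
  "alpha_admissible X T \<alpha> \<longleftrightarrow> (\<forall>x\<in>X. \<forall>y\<in>X. \<alpha> x y \<ge> 1 \<longrightarrow> \<alpha> (T x) (T y) \<ge> 1)"

definition Mxy :: "('a \<Rightarrow> 'a \<Rightarrow> real) \<Rightarrow> ('a \<Rightarrow> 'a) \<Rightarrow> 'a \<Rightarrow> 'a \<Rightarrow> real" where
  "Mxy d T x y = Max {d x y, d x (T x), d y (T y), (d x (T y) + d y (T x)) / 2}"

end

theory Submission
  imports Defs
begin

lemma box_finite:
  "finite {z::int^'n. \<forall>i. \<bar>z$i\<bar> \<le> B}"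
proof -
  have "{z::int^'n. \<forall>i. \<bar>z$i\<bar> \<le> B} \<subseteq> vec_lambda ` (PiE UNIV (\<lambda>_. {-B..B}))"
  proof
    fix z :: "int^'n" assume "z \<in> {z::int^'n. \<forall>i. \<bar>z$i\<bar> \<le> B}"
    then have "vec_nth z \<in> PiE UNIV (\<lambda>_. {-B..B})" by (auto simp: abs_le_iff) (metis minus_le_iff)
    then show "z \<in> vec_lambda ` (PiE UNIV (\<lambda>_. {-B..B}))"
      by (metis image_eqI vec_nth_inverse)
  qed
  moreover have "finite (vec_lambda ` (PiE UNIV (\<lambda>_. {-B..B})) :: (int^'n) set)"
    by (intro finite_imageI finite_PiE) auto
  ultimately show ?thesis by (rule finite_subset)
qed

lemma coord_le_lp:
  fixes x y :: "int^'n"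
  assumes "p \<ge> 1"
  shows "\<bar>real_of_int (x$i - y$i)\<bar> \<le> lp_dist p x y"
proof -
  let ?a = "\<bar>real_of_int (x$i - y$i)\<bar>"
  have "?a powr p \<le> (\<Sum>j\<in>UNIV. \<bar>real_of_int (x $ j - y $ j)\<bar> powr p)"
    by (rule member_le_sum) auto
  then have "(?a powr p) powr (1/p) \<le> (\<Sum>j\<in>UNIV. \<bar>real_of_int (x $ j - y $ j)\<bar> powr p) powr (1/p)"
    by (intro powr_mono2) (use assms in auto)
  moreover have "(?a powr p) powr (1/p) = ?a"
    using assms by (simp add: powr_powr)
  ultimately show ?thesis unfolding lp_dist_def by simp
qed

lemma coord_le_linf:
  fixes x y :: "int^'n"
  shows "\<bar>real_of_int (x$i - y$i)\<bar> \<le> linf_dist x y"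
  unfolding linf_dist_def by (rule Max_ge) auto

lemma lp_shift: "lp_dist p x y = lp_dist p (x - y) 0"
  unfolding lp_dist_def by simp

lemma linf_shift: "linf_dist x y = linf_dist (x - y) 0"
  unfolding linf_dist_def by simp

lemma dist_values_finite:
  fixes X :: "(int ^ 'n) set" and d :: "int ^ 'n \<Rightarrow> int ^ 'n \<Rightarrow> real"
  assumes "finite X \<or> is_lp_metric_on X d"
  shows "finite {d x y | x y. x \<in> X \<and> y \<in> X \<and> d x y \<le> B}"
  using assms
proof
  assume "finite X"
  then have "finite ((\<lambda>(x,y). d x y) ` (X \<times> X))" by auto
  moreover have "{d x y | x y. x \<in> X \<and> y \<in> X \<and> d x y \<le> B} \<subseteq> (\<lambda>(x,y). d x y) ` (X \<times> X)"
    by auto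
  ultimately show ?thesis by (rule finite_subset[rotated])
next
  assume "is_lp_metric_on X d"
  let ?Box = "{z::int^'n. \<forall>i. \<bar>z$i\<bar> \<le> \<lceil>B\<rceil>}"
  have fb: "finite ?Box" by (rule box_finite)
  from \<open>is_lp_metric_on X d\<close> show ?thesis
    unfolding is_lp_metric_on_def
  proof
    assume "\<exists>p::real. 1 \<le> p \<and> (\<forall>x\<in>X. \<forall>y\<in>X. d x y = lp_dist p x y)"
    then obtain p :: real where p: "1 \<le> p" "\<forall>x\<in>X. \<forall>y\<in>X. d x y = lp_dist p x y" by blast
    have "{d x y | x y. x \<in> X \<and> y \<in> X \<and> d x y \<le> B} \<subseteq> (\<lambda>z. lp_dist p z 0) ` ?Box"
    proof
      fix t assume "t \<in> {d x y | x y. x \<in> X \<and> y \<in> X \<and> d x y \<le> B}"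
      then obtain x y where xy: "x \<in> X" "y \<in> X" "d x y \<le> B" "t = d x y" by blast
      have "x - y \<in> ?Box"
      proof (simp, intro allI)
        fix i
        have "\<bar>real_of_int (x$i - y$i)\<bar> \<le> B"
          using coord_le_lp[OF p(1), of x i y] p(2) xy by auto
        then show "\<bar>x $ i - y $ i\<bar> \<le> \<lceil>B\<rceil>"
          by (metis ceiling_mono ceiling_of_int of_int_abs)
      qed
      moreover have "t = lp_dist p (x - y) 0" using xy p(2) lp_shift by metis
      ultimately show "t \<in> (\<lambda>z. lp_dist p z 0) ` ?Box" by blast
    qed
    then show ?thesis using fb finite_subset by blast
  next
    assume lin: "\<forall>x\<in>X. \<forall>y\<in>X. d x y = linf_dist x y"
    have "{d x y | x y. x \<in> X \<and> y \<in> X \<and> d x y \<le> B} \<subseteq> (\<lambda>z. linf_dist z 0) ` ?Box"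
    proof
      fix t assume "t \<in> {d x y | x y. x \<in> X \<and> y \<in> X \<and> d x y \<le> B}"
      then obtain x y where xy: "x \<in> X" "y \<in> X" "d x y \<le> B" "t = d x y" by blast
      have "x - y \<in> ?Box"
      proof (simp, intro allI)
        fix i
        have "\<bar>real_of_int (x$i - y$i)\<bar> \<le> B"
          using coord_le_linf[of x i y] lin xy by auto
        then show "\<bar>x $ i - y $ i\<bar> \<le> \<lceil>B\<rceil>"
          by (metis ceiling_mono ceiling_of_int of_int_abs)
      qed
      moreover have "t = linf_dist (x - y) 0" using xy lin linf_shift by metis
      ultimately show "t \<in> (\<lambda>z. linf_dist z 0) ` ?Box" by blast
    qed
    then show ?thesis using fb finite_subset by blast
  qed
qed

lemma strict_dec_infinite:
  fixes f :: "nat \<Rightarrow> real"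
  assumes "\<And>n. f (Suc n) < f n"
  shows "infinite (range f)"
proof -
  have "strict_mono (\<lambda>n. - f n)"
    by (rule strict_monoI_Suc) (use assms in simp)
  then have "inj (\<lambda>n. - f n)" by (rule strict_mono_imp_inj_on)
  then have "inj f" unfolding inj_def by auto
  then show ?thesis by (simp add: range_inj_infinite)
qed

theorem theorem7p8:
  fixes X :: "(int ^ 'n) set"
    and d :: "int ^ 'n \<Rightarrow> int ^ 'n \<Rightarrow> real"
    and \<kappa> :: "int ^ 'n \<Rightarrow> int ^ 'n \<Rightarrow> bool"
    and T :: "int ^ 'n \<Rightarrow> int ^ 'n"
    and \<alpha> :: "int ^ 'n \<Rightarrow> int ^ 'n \<Rightarrow> real"
    and \<psi> \<phi> :: "real \<Rightarrow> real"
  assumes dms: "digital_metric_space X d \<kappa>"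
    and fin_or_lp: "finite X \<or> is_lp_metric_on X d"
    and T_maps: "\<forall>x\<in>X. T x \<in> X"
    and alpha_nonneg: "\<forall>x\<in>X. \<forall>y\<in>X. \<alpha> x y \<ge> 0"
    and adm: "alpha_admissible X T \<alpha>"
    and x0: "\<exists>x0\<in>X. \<alpha> x0 (T x0) \<ge> 1"
    and psi: "Phi_class \<psi>" and phi: "Phi_class \<phi>"
    and contr: "\<forall>x\<in>X. \<forall>y\<in>X.
        \<alpha> x y * \<psi> (d (T x) (T y)) \<le> \<psi> (Mxy d T x y) - \<phi> (Mxy d T x y)"
  shows "(\<exists>x\<in>X. T x = x) \<and>
         (\<forall>u\<in>X. \<forall>v\<in>X. T u = u \<longrightarrow> T v = v \<longrightarrow> \<alpha> u v \<ge> 1 \<longrightarrow> u = v)"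
proof -
  have met: "metric_on X d" using dms unfolding digital_metric_space_def by blast
  have d0: "\<And>x y. x \<in> X \<Longrightarrow> y \<in> X \<Longrightarrow> d x y \<ge> 0"
    and dz: "\<And>x y. x \<in> X \<Longrightarrow> y \<in> X \<Longrightarrow> d x y = 0 \<longleftrightarrow> x = y"
    and ds: "\<And>x y. x \<in> X \<Longrightarrow> y \<in> X \<Longrightarrow> d x y = d y x"
    and dt: "\<And>x y z. x \<in> X \<Longrightarrow> y \<in> X \<Longrightarrow> z \<in> X \<Longrightarrow> d x z \<le> d x y + d y z"
    using met unfolding metric_on_def by blast+
  have psi0: "\<And>t. t \<ge> 0 \<Longrightarrow> \<psi> t \<ge> 0" using psi unfolding Phi_class_def by blast
  have phipos: "\<And>t. t > 0 \<Longrightarrow> \<phi> t > 0"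
    using phi unfolding Phi_class_def by (metis less_eq_real_def)
  have key: "d (T x) (T y) = 0"
    if "x \<in> X" "y \<in> X" "\<alpha> x y \<ge> 1" "Mxy d T x y = d (T x) (T y)" for x y
  proof (rule ccontr)
    let ?t = "d (T x) (T y)"
    assume ne: "?t \<noteq> 0"
    have t0: "?t > 0" using d0[of "T x" "T y"] T_maps that ne by auto
    have "\<psi> ?t \<le> \<alpha> x y * \<psi> ?t"
      using psi0[of ?t] t0 that(3) by (simp add: mult_le_cancel_right1)
    also have "\<dots> \<le> \<psi> ?t - \<phi> ?t" using contr[rule_format, OF that(1,2)] that(4) by simp
    finally show False using phipos[OF t0] by simp
  qed
  obtain a where a: "a \<in> X" "\<alpha> a (T a) \<ge> 1" using x0 by blast
  define xs where "xs n = (T ^^ n) a" for n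
  have xsX: "xs n \<in> X" for n by (induction n) (auto simp: xs_def a T_maps)
  have xsS: "xs (Suc n) = T (xs n)" for n by (simp add: xs_def)
  have xsa: "\<alpha> (xs n) (xs (Suc n)) \<ge> 1" for n
  proof (induction n)
    case 0 then show ?case using a by (simp add: xs_def)
  next
    case (Suc n)
    have "\<alpha> (T (xs n)) (T (xs (Suc n))) \<ge> 1"
      using adm[unfolded alpha_admissible_def, rule_format, OF xsX xsX Suc.IH] .
    then show ?case by (simp only: xsS)
  qed
  have ex: "\<exists>x\<in>X. T x = x"
  proof (rule ccontr)
    assume nf: "\<not> (\<exists>x\<in>X. T x = x)"
    define D where "D n = d (xs n) (xs (Suc n))" for n
    have Dpos: "D n > 0" for n
    proof -
      have "xs (Suc n) \<noteq> xs n" using nf xsX[of n] xsS[of n] by auto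
      then have "d (xs n) (xs (Suc n)) \<noteq> 0" using dz[OF xsX xsX] by auto
      moreover have "d (xs n) (xs (Suc n)) \<ge> 0" using d0[OF xsX xsX] .
      ultimately show ?thesis unfolding D_def by linarith
    qed
    have Ddec: "D (Suc n) < D n" for n
    proof (rule ccontr)
      assume "\<not> D (Suc n) < D n"
      then have le: "D n \<le> D (Suc n)" by simp
      let ?x = "xs n" and ?y = "xs (Suc n)" and ?z = "xs (Suc (Suc n))"
      have X3: "?x \<in> X" "?y \<in> X" "?z \<in> X" using xsX by auto
      have tri: "d ?x ?z \<le> D n + D (Suc n)" using dt[OF X3(1,2,3)] unfolding D_def .
      have yy: "d ?y ?y = 0" using dz X3 by blast
      have "Mxy d T ?x ?y = Max {D n, D n, D (Suc n), (d ?x ?z + d ?y ?y) / 2}"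
        unfolding Mxy_def D_def xsS by simp
      also have "\<dots> = D (Suc n)" using le tri yy by (simp add: max_def)
      finally have "Mxy d T ?x ?y = d (T ?x) (T ?y)" unfolding D_def xsS .
      from key[OF X3(1,2) xsa this] have "D (Suc n) = 0" unfolding D_def xsS .
      then show False using Dpos by (metis less_irrefl)
    qed
    have Dle: "D n \<le> D 0" for n
      proof (induction n)
      case (Suc n) then show ?case using Ddec[of n] by linarith
    qed simp
    have "range D \<subseteq> {d x y | x y. x \<in> X \<and> y \<in> X \<and> d x y \<le> D 0}"
    proof
      fix t assume "t \<in> range D"
      then obtain n where "t = D n" by blast
      then show "t \<in> {d x y | x y. x \<in> X \<and> y \<in> X \<and> d x y \<le> D 0}"
        using xsX[of n] xsX[of "Suc n"] Dle[of n] unfolding D_def by blast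
    qed
    moreover have "finite {d x y | x y. x \<in> X \<and> y \<in> X \<and> d x y \<le> D 0}"
      by (rule dist_values_finite[OF fin_or_lp])
    ultimately have "finite (range D)" by (rule finite_subset)
    with strict_dec_infinite[of D] Ddec show False by blast
  qed
  have uniq: "u = v" if "u \<in> X" "v \<in> X" "T u = u" "T v = v" "\<alpha> u v \<ge> 1" for u v
  proof -
    have uu: "d u u = 0" "d v v = 0" using dz that by blast+
    have "Mxy d T u v = Max {d u v, 0, 0, d u v}"
      unfolding Mxy_def using that uu ds[of u v] by simp
    also have "\<dots> = d u v" using d0[OF that(1,2)] by (simp add: max_def)
    finally have "Mxy d T u v = d (T u) (T v)" using that by simp
    from key[OF that(1,2,5) this] show ?thesis using that dz by simp
  qed
  show ?thesis
  proof (intro conjI ballI impI)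
    show "\<exists>x\<in>X. T x = x" by (rule ex)
  qed (rule uniq)
qed

end
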